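(* For $D \in \mathbb{R}^{m\times n}$ and $Q \in \mathbb{Z}^{m\times n}$ whose $j$th column stores the sorting of the $j$th column of $D$, the call QuickLexSortAllSeq$(D,Q,(),\mathbf{0})$ (empty sequence, zero vector of length $m$) has running time $O\!\left(m \sum_{i=1}^n m \frac{n!}{(n-i)!}\right)$ and space requirements $O(mn)$.
   Context: "The $j$th column of $Q$ stores the sorting of the $j$th column of $D$" means $(Q_{0j},\ldots,Q_{m-1,j})$ is a permutation of $\{0,\ldots,m-1\}$ with $D_{Q_{0j},j} \le \cdots \le D_{Q_{m-1,j},j}$. Model: unit-cost random access machine; outputting a vector of length $m$ costs $O(m)$; space includes the inputs. QuickLexSortRefine$(D,Q,i,L)$: initialize integer arrays $\mathrm{IDval},\mathrm{IDvalInit},\mathrm{subID},\mathrm{newCount},\mathrm{numNewID}$ of length $m$ to zero. For $j=0,\ldots,m-1$: let $r := Q[j,i]$, $\ell := L[r]$; if $\mathrm{IDvalInit}[\ell]=0$, set $\mathrm{IDvalInit}[\ell]:=1$, $\mathrm{IDval}[\ell]:=D[r,i]$; otherwise if $\mathrm{IDval}[\ell]\neq D[r,i]$, set $\mathrm{IDval}[\ell]:=D[r,i]$ and increment $\mathrm{newCount}[\ell]$; then set $\mathrm{subID}[r]:=\mathrm{newCount}[\ell]$. Set $\mathrm{numNewID}[m-1]:=\sum_{j=0}^{m-2}\mathrm{newCount}[j]$ and for $j=m-2,\ldots,1$, $\mathrm{numNewID}[j]:=\mathrm{numNewID}[j+1]-\mathrm{newCount}[j]$. Return $L'$ with $L'[j]:=L[j]+\mathrm{numNewID}[L[j]]+\mathrm{subID}[j]$.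 QuickLexSortAllSeq$(D,Q,(a_1,\ldots,a_p),L)$ (recursive): for each $i \in \{0,\ldots,n-1\}\setminus\{a_1,\ldots,a_p\}$: set $L' :=$ QuickLexSortRefine$(D,Q,i,L)$, output $L'$, and call QuickLexSortAllSeq$(D,Q,(a_1,\ldots,a_p,i),L')$. *)

theory Defs
  imports Complex_Main
begin

text \<open>
  Matrices: D :: nat => nat => real with D r c the entry in row r, column c
  (rows r < m, columns c < n); Q :: nat => nat => nat likewise.
  Arrays are lists. Every procedure is instrumented with a step counter
  (unit-cost RAM: one tick per constant-time loop iteration / elementary
  action, length-m array initialisation costs m, outputting a length-m
  vector costs m) and with its peak working space (in machine words).
\<close>

definition col_sorting :: "nat \<Rightarrow> nat \<Rightarrow> (nat \<Rightarrow> nat \<Rightarrow> real) \<Rightarrow> (nat \<Rightarrow> nat \<Rightarrow> nat) \<Rightarrow> bool" where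
  "col_sorting m n D Q \<longleftrightarrow>
     (\<forall>j<n. bij_betw (\<lambda>k. Q k j) {0..<m} {0..<m}
            \<and> (\<forall>k. Suc k < m \<longrightarrow> D (Q k j) j \<le> D (Q (Suc k) j) j))"

definition refine_step ::
  "(nat \<Rightarrow> nat \<Rightarrow> real) \<Rightarrow> (nat \<Rightarrow> nat \<Rightarrow> nat) \<Rightarrow> nat \<Rightarrow> nat list
   \<Rightarrow> real list \<times> nat list \<times> nat list \<times> nat list \<times> nat \<Rightarrow> nat
   \<Rightarrow> real list \<times> nat list \<times> nat list \<times> nat list \<times> nat" where
  "refine_step D Q i L st j =
     (case st of (idv, ini, sub, nc, t) \<Rightarrow>
       (let r = Q j i; l = L ! r in
        if ini ! l = 0 then
          (idv[l := D r i], ini[l := 1], sub[r := nc ! l], nc, Suc t)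
        else if idv ! l \<noteq> D r i then
          (idv[l := D r i], ini, sub[r := Suc (nc ! l)], nc[l := Suc (nc ! l)], Suc t)
        else (idv, ini, sub[r := nc ! l], nc, Suc t)))"

text \<open>QuickLexSortRefine(D,Q,i,L) for an m-row matrix. Returns (L', time, peak space).\<close>

definition refine ::
  "(nat \<Rightarrow> nat \<Rightarrow> real) \<Rightarrow> (nat \<Rightarrow> nat \<Rightarrow> nat) \<Rightarrow> nat \<Rightarrow> nat \<Rightarrow> nat list
   \<Rightarrow> nat list \<times> nat \<times> nat" where
  "refine D Q m i L =
    (let t_init = 5 * m;
         (idv, ini, sub, nc, t1) =
            foldl (refine_step D Q i L)
              (replicate m 0, replicate m 0, replicate m 0, replicate m 0, 0) [0..<m];
         nn0 = replicate m 0;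
         nn1 = nn0[m - 1 := sum_list (take (m - 1) nc)];
         t_sum = m;
         (nn, t2) = foldl (\<lambda>(nn, t) j. (nn[j := nn ! Suc j - nc ! j], Suc t))
                      (nn1, 0) (rev [1..<m - 1]);
         L' = map (\<lambda>j. L ! j + nn ! (L ! j) + sub ! j) [0..<m];
         t_out = m
     in (L', t_init + t1 + t_sum + t2 + t_out, 6 * m + 4))"

text \<open>QuickLexSortAllSeq(D,Q,a,L): returns (sequence of output vectors,
  running time, peak working space of the call beyond the global data).
  The loop ranges over the remaining indices {0..n-1} minus set a, one tick
  per iteration; extending the sequence costs one tick.\<close>

function allseq ::
  "(nat \<Rightarrow> nat \<Rightarrow> real) \<Rightarrow> (nat \<Rightarrow> nat \<Rightarrow> nat) \<Rightarrow> nat \<Rightarrow> nat \<Rightarrow> nat list \<Rightarrow> nat list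
   \<Rightarrow> nat list list \<times> nat \<times> nat" where
  "allseq D Q m n a L =
    (let res = map (\<lambda>i.
            let rf = refine D Q m i L;
                L' = fst rf;
                rc = allseq D Q m n (a @ [i]) L'
            in (L' # fst rc,
                1 + fst (snd rf) + m + 1 + fst (snd rc),
                max (snd (snd rf)) (m + snd (snd rc))))
          (filter (\<lambda>i. i \<notin> set a) [0..<n])
     in (concat (map fst res),
         1 + sum_list (map (\<lambda>x. fst (snd x)) res),
         2 + foldr max (map (\<lambda>x. snd (snd x)) res) 0))"
  by pat_completeness auto
termination
proof (relation "measure (\<lambda>(D, Q, m, n, a, L). n - card (set a \<inter> {..<n}))", goal_cases)
  case 1 then show ?case by simp
next
  case (2 D Q m n a L i x)
  then have i: "i < n" "i \<notin> set a" by auto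
  have fin: "finite (set a \<inter> {..<n})" by simp
  have eq: "set (a @ [i]) \<inter> {..<n} = insert i (set a \<inter> {..<n})" using i by auto
  have c: "card (set (a @ [i]) \<inter> {..<n}) = Suc (card (set a \<inter> {..<n}))"
    using i fin by (simp add: eq)
  have "card (set (a @ [i]) \<inter> {..<n}) \<le> n"
    by (metis card_lessThan card_mono finite_lessThan inf_le2)
  then show ?case using c by simp
qed

text \<open>Space counts the inputs D and Q (m*n words each), the vector L (m words),
  the shared sequence/remaining-index structure (2n words), plus the peak
  working space of the recursion.\<close>

definition qls_time :: "(nat \<Rightarrow> nat \<Rightarrow> real) \<Rightarrow> (nat \<Rightarrow> nat \<Rightarrow> nat) \<Rightarrow> nat \<Rightarrow> nat \<Rightarrow> nat" where
  "qls_time D Q m n = fst (snd (allseq D Q m n [] (replicate m 0)))"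

definition qls_space :: "(nat \<Rightarrow> nat \<Rightarrow> real) \<Rightarrow> (nat \<Rightarrow> nat \<Rightarrow> nat) \<Rightarrow> nat \<Rightarrow> nat \<Rightarrow> nat" where
  "qls_space D Q m n = 2 * m * n + m + 2 * n + snd (snd (allseq D Q m n [] (replicate m 0)))"

end

theory Submission imports Defs begin

lemma fold1_ticks: "snd (snd (snd (snd (foldl (refine_step D Q i L) st xs)))) = snd (snd (snd (snd st))) + length xs"
  by (induction xs arbitrary: st) (auto simp: refine_step_def Let_def split: prod.splits)

lemma fold2_ticks: "snd (foldl (\<lambda>(nn, t) j. (nn[j := nn ! Suc j - nc ! j], Suc t)) st xs) = snd st + length xs"
  by (induction xs arbitrary: st) (auto split: prod.splits)

lemma refine_time: "fst (snd (refine D Q m i L)) \<le> 9*m"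
proof -
  obtain idv ini sub nc t1 where f1: "foldl (refine_step D Q i L)
              (replicate m 0, replicate m 0, replicate m 0, replicate m 0, 0) [0..<m] = (idv, ini, sub, nc, t1)"
    using prod_cases5 by blast
  have t1: "t1 = m" using fold1_ticks[of D Q i L "(replicate m 0, replicate m 0, replicate m 0, replicate m 0, 0)" "[0..<m]"] f1 by simp
  obtain nn t2 where f2: "foldl (\<lambda>(nn, t) j. (nn[j := nn ! Suc j - nc ! j], Suc t))
                      ((replicate m 0)[m - 1 := sum_list (take (m - 1) nc)], 0) (rev [1..<m - 1]) = (nn, t2)"
    by (rule prod.exhaust)
  have t2: "t2 \<le> m" using fold2_ticks[of nc "((replicate m 0)[m - 1 := sum_list (take (m - 1) nc)], 0)" "rev [1..<m - 1]"] f2 by simp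
  have "fst (snd (refine D Q m i L)) = 5*m + t1 + m + t2 + m"
    by (simp only: refine_def Let_def f1 f2 prod.case fst_conv snd_conv)
  then show ?thesis using t1 t2 by simp
qed

lemma refine_space: "snd (snd (refine D Q m i L)) = 6*m+4"
proof -
  obtain idv ini sub nc t1 where f1: "foldl (refine_step D Q i L)
              (replicate m 0, replicate m 0, replicate m 0, replicate m 0, 0) [0..<m] = (idv, ini, sub, nc, t1)"
    using prod_cases5 by blast
  obtain nn t2 where f2: "foldl (\<lambda>(nn, t) j. (nn[j := nn ! Suc j - nc ! j], Suc t))
                      ((replicate m 0)[m - 1 := sum_list (take (m - 1) nc)], 0) (rev [1..<m - 1]) = (nn, t2)"
    by (rule prod.exhaust)
  show ?thesis by (simp only: refine_def Let_def f1 f2 prod.case fst_conv snd_conv)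
qed

fun A :: "nat \<Rightarrow> nat" where "A 0 = 1" | "A (Suc r) = 1 + Suc r * A r"

lemma A_fact: "A r + 1 \<le> 3 * fact r"
proof (induction r)
  case 0 then show ?case by simp
next
  case (Suc r)
  show ?case
  proof (cases r)
    case 0 then show ?thesis by simp
  next
    case (Suc k)
    have "A (Suc r) + 1 = 2 + Suc r * A r" by simp
    also have "\<dots> \<le> 2 + Suc r * (3 * fact r - 1)" using Suc.IH by (intro add_left_mono mult_left_mono) auto
    also have "\<dots> \<le> 3 * fact (Suc r)"
    proof -
      have f: "fact r \<ge> (1::nat)" by (simp add: fact_ge_1)
      have "Suc r * (3 * fact r - 1) = 3 * fact (Suc r) - Suc r"
        by (simp add: algebra_simps diff_mult_distrib2)
      moreover have "3 * fact (Suc r) \<ge> (Suc r :: nat)"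
      proof -
        have "Suc r * 1 \<le> Suc r * fact r" using f by (rule mult_le_mono2)
        moreover have "fact (Suc r) = Suc r * (fact r :: nat)" by (simp add: fact_Suc)
        ultimately show ?thesis by simp
      qed
      ultimately show ?thesis using Suc by simp
    qed
    finally show ?thesis .
  qed
qed

lemma sum_list_le: "(\<And>x. x \<in> set xs \<Longrightarrow> g x \<le> (B::nat)) \<Longrightarrow> sum_list (map g xs) \<le> length xs * B"
  by (induction xs) (auto intro: add_mono)

lemma foldr_max_le: "(\<And>x. x \<in> set xs \<Longrightarrow> g x \<le> (B::nat)) \<Longrightarrow> foldr max (map g xs) 0 \<le> B"
  by (induction xs) auto

lemma len_filter: "length (filter P [0..<n]) = card {j. j < n \<and> P j}"
proof -
  have "card (set (filter P [0..<n])) = length (filter P [0..<n])"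
    by (rule distinct_card) simp
  then have "length (filter P [0..<n]) = card (set (filter P [0..<n]))" by simp
  also have "set (filter P [0..<n]) = {j. j < n \<and> P j}" by auto
  finally show ?thesis .
qed

lemma child_len:
  assumes "i \<in> set (filter (\<lambda>i. i \<notin> set a) [0..<n])"
  shows "length (filter (\<lambda>j. j \<notin> set (a @ [i])) [0..<n]) = length (filter (\<lambda>i. i \<notin> set a) [0..<n]) - 1"
proof -
  have "{j. j < n \<and> j \<notin> set (a @ [i])} = {j. j < n \<and> j \<notin> set a} - {i}" by auto
  moreover have "i \<in> {j. j < n \<and> j \<notin> set a}" using assms by auto
  ultimately show ?thesis unfolding len_filter by simp
qed

declare allseq.simps[simp del]

lemma allseq_bound:
  assumes "length (filter (\<lambda>i. i \<notin> set a) [0..<n]) = r" "m \<ge> 1"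
  shows "fst (snd (allseq D Q m n a L)) + 14*m \<le> 15*m*A r \<and> snd (snd (allseq D Q m n a L)) \<le> (m+2)*r + 6*m+6"
  using assms
proof (induction r arbitrary: a L)
  case 0
  then have "filter (\<lambda>i. i \<notin> set a) [0..<n] = []" by simp
  then show ?case using 0 by (simp add: allseq.simps[of D Q m n a L] Let_def)
next
  case (Suc r)
  define xs where "xs = filter (\<lambda>i. i \<notin> set a) [0..<n]"
  define f where "f = (\<lambda>i.
            let rf = refine D Q m i L;
                L' = fst rf;
                rc = allseq D Q m n (a @ [i]) L'
            in (L' # fst rc,
                1 + fst (snd rf) + m + 1 + fst (snd rc),
                max (snd (snd rf)) (m + snd (snd rc))))"
  have eq: "allseq D Q m n a L = (concat (map fst (map f xs)),
         1 + sum_list (map (\<lambda>x. fst (snd x)) (map f xs)),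
         2 + foldr max (map (\<lambda>x. snd (snd x)) (map f xs)) 0)"
    unfolding xs_def f_def by (subst allseq.simps) (simp add: Let_def del: allseq.simps)
  have IH: "fst (snd (allseq D Q m n (a@[i]) L')) + 14*m \<le> 15*m*A r \<and> snd (snd (allseq D Q m n (a@[i]) L')) \<le> (m+2)*r + 6*m+6"
    if "i \<in> set xs" for i L'
    using Suc.IH[of "a@[i]" L'] child_len[of i a n] that Suc.prems unfolding xs_def by simp
  have t: "fst (snd (f i)) \<le> 15*m*A r" if "i \<in> set xs" for i
    using IH[OF that, of "fst (refine D Q m i L)"] refine_time[of D Q m i L] Suc.prems(2)
    unfolding f_def Let_def by simp
  have s: "snd (snd (f i)) \<le> (m+2)*r + 7*m+6" if "i \<in> set xs" for i
    using IH[OF that, of "fst (refine D Q m i L)"] refine_space[of D Q m i L] Suc.prems(2)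
    unfolding f_def Let_def by simp
  have lx: "length xs = Suc r" using Suc.prems unfolding xs_def by simp
  have T: "sum_list (map (\<lambda>x. fst (snd x)) (map f xs)) \<le> Suc r * (15*m*A r)"
    using sum_list_le[of xs "\<lambda>x. fst (snd (f x))" "15*m*A r"] t lx by (simp add: comp_def)
  have S: "foldr max (map (\<lambda>x. snd (snd x)) (map f xs)) 0 \<le> (m+2)*r + 7*m+6"
    using foldr_max_le[of xs "\<lambda>x. snd (snd (f x))"] s by (simp add: comp_def)
  show ?case
  proof
    show "fst (snd (allseq D Q m n a L)) + 14 * m \<le> 15 * m * A (Suc r)"
      unfolding eq using T Suc.prems(2) by (simp add: algebra_simps)
    show "snd (snd (allseq D Q m n a L)) \<le> (m + 2) * Suc r + 6 * m + 6"
      unfolding eq using S by simp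
  qed
qed

theorem mainTheorem6:
  "\<exists>C::real. \<forall>(m::nat) (n::nat) (D::nat \<Rightarrow> nat \<Rightarrow> real) (Q::nat \<Rightarrow> nat \<Rightarrow> nat).
     1 \<le> m \<longrightarrow> 1 \<le> n \<longrightarrow> col_sorting m n D Q \<longrightarrow>
       real (qls_time D Q m n)
         \<le> C * (real m * (\<Sum>i=1..n. real m * (fact n / fact (n - i))))
     \<and> real (qls_space D Q m n) \<le> C * (real m * real n)"
proof (intro exI allI impI)
  fix m n :: nat and D Q
  assume m: "1 \<le> m" and n: "1 \<le> n"
  have len: "length (filter (\<lambda>i. i \<notin> set []) [0..<n]) = n" by simp
  note B = allseq_bound[OF len m, of D Q "replicate m 0"]
  define S where "S = (\<Sum>i=1..n. real m * (fact n / fact (n - i)))"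
  have "real m * fact n = real m * (fact n / fact (n - n))" by simp
  also have "\<dots> \<le> S" unfolding S_def
    by (rule member_le_sum[where f="\<lambda>i. real m * (fact n / fact (n - i))"]) (use n in auto)
  finally have S1: "real m * fact n \<le> S" .
  have "qls_time D Q m n \<le> 15*m*A n" using B unfolding qls_time_def by (simp del: allseq.simps)
  also have "\<dots> \<le> 15*m*(3*fact n)" using A_fact[of n] by simp
  finally have "qls_time D Q m n \<le> 15*m*(3*fact n)" .
  then have "real (qls_time D Q m n) \<le> real (15*m*(3*fact n))" by (simp only: of_nat_le_iff)
  also have "real (15*m*(3*fact n)) = 45 * (real m * fact n)" by (simp add: of_nat_fact)
  finally have "real (qls_time D Q m n) \<le> 45 * (real m * fact n)" .
  also have "\<dots> \<le> 45 * S" using S1 by simp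
  also have "\<dots> \<le> 45 * (real m * S)"
  proof -
    have "0 \<le> real m * fact n" by simp
    then have "S \<ge> 0" using S1 by linarith
    moreover have "real m \<ge> 1" using m by simp
    ultimately have "1 * S \<le> real m * S" by (intro mult_right_mono)
    then show ?thesis by simp
  qed
  finally have T: "real (qls_time D Q m n) \<le> 45 * (real m * S)" .
  have "qls_space D Q m n \<le> 2*m*n + m + 2*n + ((m+2)*n + 6*m + 6)"
    using B unfolding qls_space_def by (simp del: allseq.simps)
  also have "\<dots> \<le> 45 * (m*n)"
  proof -
    have a: "m \<le> m*n" "n \<le> m*n" "1 \<le> m*n" using m n by auto
    have e: "2*m*n + m + 2*n + ((m+2)*n + 6*m + 6) = 3*(m*n) + 7*m + 4*n + 6"
      by (simp add: algebra_simps)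
    show ?thesis unfolding e using a by linarith
  qed
  finally have "real (qls_space D Q m n) \<le> real (45 * (m*n))" by (simp only: of_nat_le_iff)
  then have "real (qls_space D Q m n) \<le> 45 * (real m * real n)" by simp
  then show "real (qls_time D Q m n) \<le> 45 * (real m * (\<Sum>i=1..n. real m * (fact n / fact (n - i))))
     \<and> real (qls_space D Q m n) \<le> 45 * (real m * real n)" using T unfolding S_def by simp
qed

end
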